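(* Let $(W,S)$ be a Coxeter system with $S$ finite, $\phi:\operatorname{Ad}(Q_W)\to W$ the homomorphism $e_x\mapsto x$, and $C_W=\ker\phi$. Then $C_W$ is a central subgroup of $\operatorname{Ad}(Q_W)$.
   Context: A Coxeter system $(W,S)$: $S$ finite, $m:S\times S\to\mathbb{N}\cup\{\infty\}$ with $m(s,s)=1$, $2\le m(s,t)=m(t,s)\le\infty$ for $s\ne t$, $W=\langle s\in S\mid (st)^{m(s,t)}=1\ (m(s,t)<\infty)\rangle$. The Coxeter quandle is $Q_W=\bigcup_{w\in W}w^{-1}Sw$ with $x\ast y=yxy$, and $\operatorname{Ad}(Q_W)=\langle e_x\ (x\in Q_W)\mid e_y^{-1}e_xe_y=e_{x\ast y}\rangle$; $\phi$ is well defined. *)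

theory Defs
  imports "HOL-Algebra.Algebra" "HOL-Library.Extended_Nat"
begin

text \<open>A word over a generator set Gen is a list of letters (x, b), where b = True means
  the inverse letter x^-1.\<close>

type_synonym 'a word = "('a \<times> bool) list"

definition word_on :: "'a set \<Rightarrow> 'a word \<Rightarrow> bool" where
  "word_on Gen w \<longleftrightarrow> (\<forall>p\<in>set w. fst p \<in> Gen)"

inductive pres_eq :: "'a set \<Rightarrow> 'a word set \<Rightarrow> 'a word \<Rightarrow> 'a word \<Rightarrow> bool"
  for Gen :: "'a set" and R :: "'a word set" where
  refl: "word_on Gen w \<Longrightarrow> pres_eq Gen R w w"
| sym: "pres_eq Gen R u v \<Longrightarrow> pres_eq Gen R v u"
| trans: "pres_eq Gen R u v \<Longrightarrow> pres_eq Gen R v w \<Longrightarrow> pres_eq Gen R u w"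
| cancel: "x \<in> Gen \<Longrightarrow> word_on Gen u \<Longrightarrow> word_on Gen v \<Longrightarrow>
     pres_eq Gen R (u @ [(x, b), (x, \<not> b)] @ v) (u @ v)"
| relator: "r \<in> R \<Longrightarrow> word_on Gen r \<Longrightarrow> word_on Gen u \<Longrightarrow> word_on Gen v \<Longrightarrow>
     pres_eq Gen R (u @ r @ v) (u @ v)"

definition pres_class :: "'a set \<Rightarrow> 'a word set \<Rightarrow> 'a word \<Rightarrow> 'a word set" where
  "pres_class Gen R w = {v. pres_eq Gen R w v}"

definition presented_group :: "'a set \<Rightarrow> 'a word set \<Rightarrow> 'a word set monoid" where
  "presented_group Gen R =
     \<lparr> carrier = {pres_class Gen R w | w. word_on Gen w},
       monoid.mult = (\<lambda>A B. pres_class Gen R ((SOME a. a \<in> A) @ (SOME b. b \<in> B))),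
       one = pres_class Gen R [] \<rparr>"

definition gen_elem :: "'a set \<Rightarrow> 'a word set \<Rightarrow> 'a \<Rightarrow> 'a word set" where
  "gen_elem Gen R x = pres_class Gen R [(x, False)]"

definition eval_word :: "('b, 'm) monoid_scheme \<Rightarrow> ('a \<Rightarrow> 'b) \<Rightarrow> 'a word \<Rightarrow> 'b" where
  "eval_word H f w =
     foldr (\<lambda>(x, b) acc. (if b then inv\<^bsub>H\<^esub> (f x) else f x) \<otimes>\<^bsub>H\<^esub> acc) w \<one>\<^bsub>H\<^esub>"

text \<open>The homomorphism \<langle>Gen | R\<rangle> \<rightarrow> H induced by f (assumed well defined).\<close>

definition induced_hom :: "('b, 'm) monoid_scheme \<Rightarrow> ('a \<Rightarrow> 'b) \<Rightarrow> 'a word set \<Rightarrow> 'b" where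
  "induced_hom H f A = eval_word H f (SOME w. w \<in> A)"

definition coxeter_matrix :: "'a set \<Rightarrow> ('a \<Rightarrow> 'a \<Rightarrow> enat) \<Rightarrow> bool" where
  "coxeter_matrix S m \<longleftrightarrow> finite S \<and>
     (\<forall>s\<in>S. m s s = 1) \<and>
     (\<forall>s\<in>S. \<forall>t\<in>S. s \<noteq> t \<longrightarrow> 2 \<le> m s t \<and> m s t = m t s)"

definition coxeter_rels :: "'a set \<Rightarrow> ('a \<Rightarrow> 'a \<Rightarrow> enat) \<Rightarrow> 'a word set" where
  "coxeter_rels S m = {concat (replicate k [(s, False), (t, False)]) | s t k.
      s \<in> S \<and> t \<in> S \<and> m s t = enat k}"

definition coxeter_group :: "'a set \<Rightarrow> ('a \<Rightarrow> 'a \<Rightarrow> enat) \<Rightarrow> 'a word set monoid" where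
  "coxeter_group S m = presented_group S (coxeter_rels S m)"

definition coxeter_gen :: "'a set \<Rightarrow> ('a \<Rightarrow> 'a \<Rightarrow> enat) \<Rightarrow> 'a \<Rightarrow> 'a word set" where
  "coxeter_gen S m s = gen_elem S (coxeter_rels S m) s"

definition coxeter_quandle :: "'a set \<Rightarrow> ('a \<Rightarrow> 'a \<Rightarrow> enat) \<Rightarrow> 'a word set set" where
  "coxeter_quandle S m =
     {inv\<^bsub>coxeter_group S m\<^esub> w \<otimes>\<^bsub>coxeter_group S m\<^esub> coxeter_gen S m s
        \<otimes>\<^bsub>coxeter_group S m\<^esub> w | w s. w \<in> carrier (coxeter_group S m) \<and> s \<in> S}"

definition qop :: "'a set \<Rightarrow> ('a \<Rightarrow> 'a \<Rightarrow> enat) \<Rightarrow> 'a word set \<Rightarrow> 'a word set \<Rightarrow> 'a word set" where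
  "qop S m x y = y \<otimes>\<^bsub>coxeter_group S m\<^esub> x \<otimes>\<^bsub>coxeter_group S m\<^esub> y"

definition adj_rels :: "'a set \<Rightarrow> ('a \<Rightarrow> 'a \<Rightarrow> enat) \<Rightarrow> 'a word set word set" where
  "adj_rels S m = {[(y, True), (x, False), (y, False), (qop S m x y, True)] | x y.
      x \<in> coxeter_quandle S m \<and> y \<in> coxeter_quandle S m}"

definition adj_group :: "'a set \<Rightarrow> ('a \<Rightarrow> 'a \<Rightarrow> enat) \<Rightarrow> 'a word set word set monoid" where
  "adj_group S m = presented_group (coxeter_quandle S m) (adj_rels S m)"

definition adj_phi :: "'a set \<Rightarrow> ('a \<Rightarrow> 'a \<Rightarrow> enat) \<Rightarrow> 'a word set word set \<Rightarrow> 'a word set" where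
  "adj_phi S m = induced_hom (coxeter_group S m) id"

definition central_subgroup :: "'a set \<Rightarrow> ('a, 'm) monoid_scheme \<Rightarrow> bool" where
  "central_subgroup K G \<longleftrightarrow> subgroup K G \<and>
     (\<forall>z\<in>K. \<forall>g\<in>carrier G. z \<otimes>\<^bsub>G\<^esub> g = g \<otimes>\<^bsub>G\<^esub> z)"

end

theory Submission imports Defs begin

lemma word_on_simps[simp]:
  "word_on G [] = True" "word_on G (a#w) = (fst a \<in> G \<and> word_on G w)"
  "word_on G (u@v) = (word_on G u \<and> word_on G v)"
  by (auto simp: word_on_def)

lemma pe_word: "pres_eq Gen R u v \<Longrightarrow> word_on Gen u \<and> word_on Gen v"
  by (induction rule: pres_eq.induct) auto

lemma pe_app_left: "pres_eq Gen R u v \<Longrightarrow> word_on Gen w \<Longrightarrow> pres_eq Gen R (w@u) (w@v)"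
proof (induction rule: pres_eq.induct)
  case (refl w') then show ?case by (simp add: pres_eq.refl)
next
  case (sym u v) then show ?case by (simp add: pres_eq.sym)
next
  case (trans u v w') then show ?case by (meson pres_eq.trans)
next
  case (cancel x u v b) then show ?case
    using pres_eq.cancel[where u="w@u" and v=v and x=x and b=b and Gen=Gen and R=R] by simp
next
  case (relator r u v) then show ?case
    using pres_eq.relator[where u="w@u" and v=v and r=r and Gen=Gen and R=R] by simp
qed

lemma pe_app_right: "pres_eq Gen R u v \<Longrightarrow> word_on Gen w \<Longrightarrow> pres_eq Gen R (u@w) (v@w)"
proof (induction rule: pres_eq.induct)
  case (refl w') then show ?case by (simp add: pres_eq.refl)
next
  case (sym u v) then show ?case by (simp add: pres_eq.sym)
next
  case (trans u v w') then show ?case by (meson pres_eq.trans)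
next
  case (cancel x u v b) then show ?case
    using pres_eq.cancel[where u=u and v="v@w" and x=x and b=b and Gen=Gen and R=R] by simp
next
  case (relator r u v) then show ?case
    using pres_eq.relator[where u=u and v="v@w" and r=r and Gen=Gen and R=R] by simp
qed

lemma pe_app: "pres_eq Gen R u u' \<Longrightarrow> pres_eq Gen R v v' \<Longrightarrow> pres_eq Gen R (u@v) (u'@v')"
  by (meson pe_app_left pe_app_right pe_word pres_eq.trans)

lemma pe_cancel': "x \<in> Gen \<Longrightarrow> c = (\<not> b) \<Longrightarrow> pres_eq Gen R [(x,b),(x,c)] []"
  using pres_eq.cancel[where u="[]" and v="[]" and x=x and b=b and Gen=Gen and R=R] by simp

lemma pe_rel': "r \<in> R \<Longrightarrow> word_on Gen r \<Longrightarrow> pres_eq Gen R r []"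
  using pres_eq.relator[where u="[]" and v="[]" and r=r and Gen=Gen and R=R] by simp

lemma class_eq: "pres_eq Gen R u v \<Longrightarrow> pres_class Gen R u = pres_class Gen R v"
  unfolding pres_class_def by (rule Collect_cong) (meson pres_eq.sym pres_eq.trans)

lemma class_eq_iff: "word_on Gen u \<Longrightarrow> pres_class Gen R u = pres_class Gen R v \<longleftrightarrow> pres_eq Gen R u v"
proof
  assume "word_on Gen u" "pres_class Gen R u = pres_class Gen R v"
  then have "u \<in> pres_class Gen R v" unfolding pres_class_def by (auto intro: pres_eq.refl)
  then show "pres_eq Gen R u v" unfolding pres_class_def by (simp add: pres_eq.sym)
qed (rule class_eq)

lemma some_class: "word_on Gen a \<Longrightarrow> pres_eq Gen R a (SOME x. x \<in> pres_class Gen R a)"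
  unfolding pres_class_def by (simp add: someI[of "pres_eq Gen R a" a] pres_eq.refl)

lemma mult_class: "word_on Gen a \<Longrightarrow> word_on Gen b \<Longrightarrow>
  pres_class Gen R a \<otimes>\<^bsub>presented_group Gen R\<^esub> pres_class Gen R b = pres_class Gen R (a@b)"
  unfolding presented_group_def apply simp
  by (metis class_eq pe_app pres_eq.sym some_class)

definition winv :: "'a word \<Rightarrow> 'a word" where
  "winv w = rev (map (\<lambda>(x,b). (x, \<not> b)) w)"

lemma winv_simps[simp]: "winv [] = []" "winv (a#w) = winv w @ [(fst a, \<not> snd a)]"
  "winv (u@v) = winv v @ winv u" "winv (winv w) = w"
  "word_on G (winv w) = word_on G w"
  by (auto simp: winv_def word_on_def case_prod_beta rev_map comp_def)

lemma pe_winv_r: "word_on Gen w \<Longrightarrow> pres_eq Gen R (w @ winv w) []"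
proof (induction w)
  case Nil then show ?case by (simp add: pres_eq.refl)
next
  case (Cons a w)
  obtain x b where a: "a = (x,b)" by force
  have "pres_eq Gen R ([a] @ (w @ winv w) @ [(x,\<not>b)]) ([a] @ [] @ [(x,\<not>b)])"
    using Cons a by (intro pe_app pres_eq.refl) auto
  moreover have "pres_eq Gen R [(x,b),(x,\<not>b)] []" using Cons a by (intro pe_cancel') auto
  ultimately show ?case using a by (auto intro: pres_eq.trans)
qed

lemma pe_winv_l: "word_on Gen w \<Longrightarrow> pres_eq Gen R (winv w @ w) []"
  using pe_winv_r[of Gen "winv w" R] by simp

lemma carrier_pg: "carrier (presented_group Gen R) = {pres_class Gen R w | w. word_on Gen w}"
  by (simp add: presented_group_def)

lemma one_pg: "one (presented_group Gen R) = pres_class Gen R []"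
  by (simp add: presented_group_def)

lemma group_pg: "group (presented_group Gen R)"
proof (rule groupI)
  fix x y assume "x \<in> carrier (presented_group Gen R)" "y \<in> carrier (presented_group Gen R)"
  then show "x \<otimes>\<^bsub>presented_group Gen R\<^esub> y \<in> carrier (presented_group Gen R)"
    unfolding carrier_pg by (auto simp: mult_class)
next
  show "one (presented_group Gen R) \<in> carrier (presented_group Gen R)"
    unfolding carrier_pg one_pg by auto
next
  fix x y z assume "x \<in> carrier (presented_group Gen R)" "y \<in> carrier (presented_group Gen R)"
    "z \<in> carrier (presented_group Gen R)"
  then show "x \<otimes>\<^bsub>presented_group Gen R\<^esub> y \<otimes>\<^bsub>presented_group Gen R\<^esub> z =
      x \<otimes>\<^bsub>presented_group Gen R\<^esub> (y \<otimes>\<^bsub>presented_group Gen R\<^esub> z)"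
    unfolding carrier_pg by (auto simp: mult_class)
next
  fix x assume "x \<in> carrier (presented_group Gen R)"
  then show "one (presented_group Gen R) \<otimes>\<^bsub>presented_group Gen R\<^esub> x = x"
    unfolding carrier_pg one_pg by (auto simp: mult_class[of Gen "[]", simplified])
next
  fix x assume "x \<in> carrier (presented_group Gen R)"
  then obtain w where x: "x = pres_class Gen R w" "word_on Gen w" unfolding carrier_pg by auto
  show "\<exists>y\<in>carrier (presented_group Gen R). y \<otimes>\<^bsub>presented_group Gen R\<^esub> x = one (presented_group Gen R)"
    apply (rule bexI[of _ "pres_class Gen R (winv w)"])
    using x by (auto simp: mult_class one_pg carrier_pg intro!: class_eq pe_winv_l exI[of _ "winv w"])
qed


lemma eval_Nil[simp]: "eval_word H f [] = \<one>\<^bsub>H\<^esub>"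
  by (simp add: eval_word_def)

lemma eval_Cons[simp]: "eval_word H f (a#w) =
   (if snd a then inv\<^bsub>H\<^esub> (f (fst a)) else f (fst a)) \<otimes>\<^bsub>H\<^esub> eval_word H f w"
  by (simp add: eval_word_def case_prod_beta)

lemma (in group) eval_closed: "f ` Gen \<subseteq> carrier G \<Longrightarrow> word_on Gen w \<Longrightarrow> eval_word G f w \<in> carrier G"
  by (induction w) auto

lemma (in group) eval_append: "f ` Gen \<subseteq> carrier G \<Longrightarrow> word_on Gen u \<Longrightarrow> word_on Gen v \<Longrightarrow>
   eval_word G f (u@v) = eval_word G f u \<otimes> eval_word G f v"
  by (induction u) (auto simp: eval_closed m_assoc image_subset_iff)

lemma (in group) eval_resp:
  assumes "pres_eq Gen R u v" "f ` Gen \<subseteq> carrier G"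
    "\<And>r. r \<in> R \<Longrightarrow> word_on Gen r \<Longrightarrow> eval_word G f r = \<one>"
  shows "eval_word G f u = eval_word G f v"
  using assms(1)
proof (induction rule: pres_eq.induct)
  case (cancel x u v b)
  have fx: "f x \<in> carrier G" using cancel assms(2) by auto
  have "eval_word G f [(x,b),(x,\<not>b)] = \<one>" using fx by auto
  moreover have "eval_word G f (u @ [(x,b),(x,\<not>b)] @ v) =
     eval_word G f u \<otimes> (eval_word G f [(x,b),(x,\<not>b)] \<otimes> eval_word G f v)"
    using eval_append[OF assms(2), of u "[(x,b),(x,\<not>b)] @ v"]
      eval_append[OF assms(2), of "[(x,b),(x,\<not>b)]" v] cancel by (simp del: eval_Cons)
  ultimately show ?case using cancel assms(2)
    by (simp add: eval_append eval_closed del: eval_Cons)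
next
  case (relator r u v)
  then show ?case using assms(2,3) by (simp add: eval_append eval_closed)
qed auto

lemma (in group) induced_class:
  assumes "word_on Gen a" "f ` Gen \<subseteq> carrier G"
    "\<And>r. r \<in> R \<Longrightarrow> word_on Gen r \<Longrightarrow> eval_word G f r = \<one>"
  shows "induced_hom G f (pres_class Gen R a) = eval_word G f a"
  unfolding induced_hom_def using eval_resp[OF some_class[OF assms(1)] assms(2,3)] by simp

lemma (in group) induced_hom_hom:
  assumes "f ` Gen \<subseteq> carrier G"
    "\<And>r. r \<in> R \<Longrightarrow> word_on Gen r \<Longrightarrow> eval_word G f r = \<one>"
  shows "group_hom (presented_group Gen R) G (induced_hom G f)"
proof -
  have "induced_hom G f \<in> hom (presented_group Gen R) G"
  proof (rule homI)
    fix x assume "x \<in> carrier (presented_group Gen R)"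
    then show "induced_hom G f x \<in> carrier G"
      unfolding carrier_pg using induced_class[OF _ assms] eval_closed[OF assms(1)] by auto
  next
    fix x y assume "x \<in> carrier (presented_group Gen R)" "y \<in> carrier (presented_group Gen R)"
    then obtain a b where "x = pres_class Gen R a" "word_on Gen a" "y = pres_class Gen R b" "word_on Gen b"
      unfolding carrier_pg by auto
    then show "induced_hom G f (x \<otimes>\<^bsub>presented_group Gen R\<^esub> y) = induced_hom G f x \<otimes> induced_hom G f y"
      by (simp add: mult_class induced_class[OF _ assms] eval_append[OF assms(1)])
  qed
  then show ?thesis
    by (simp add: group_hom.intro group_hom_axioms.intro group_pg is_group)
qed


lemma W_group: "group (coxeter_group S m)"
  unfolding coxeter_group_def by (rule group_pg)

lemma gen_carrier: "s \<in> S \<Longrightarrow> coxeter_gen S m s \<in> carrier (coxeter_group S m)"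
  unfolding coxeter_gen_def gen_elem_def coxeter_group_def carrier_pg by auto

lemma gen_sq:
  assumes "coxeter_matrix S m" "s \<in> S"
  shows "coxeter_gen S m s \<otimes>\<^bsub>coxeter_group S m\<^esub> coxeter_gen S m s = \<one>\<^bsub>coxeter_group S m\<^esub>"
proof -
  have "m s s = enat 1" using assms by (simp add: coxeter_matrix_def one_enat_def)
  then have "[(s,False),(s,False)] \<in> coxeter_rels S m"
    unfolding coxeter_rels_def using assms(2)
    by (intro CollectI exI[of _ s] exI[of _ 1]) simp
  then have "pres_eq S (coxeter_rels S m) [(s,False),(s,False)] []"
    using assms(2) by (intro pe_rel') auto
  then show ?thesis
    unfolding coxeter_gen_def gen_elem_def coxeter_group_def
    using assms(2) by (simp add: mult_class one_pg class_eq)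
qed

lemma Q_carrier: "y \<in> coxeter_quandle S m \<Longrightarrow> y \<in> carrier (coxeter_group S m)"
proof -
  interpret W: group "coxeter_group S m" by (rule W_group)
  show "y \<in> coxeter_quandle S m \<Longrightarrow> y \<in> carrier (coxeter_group S m)"
    unfolding coxeter_quandle_def using gen_carrier by (auto intro!: W.m_closed W.inv_closed)
qed

lemma Q_sq:
  assumes "coxeter_matrix S m" "y \<in> coxeter_quandle S m"
  shows "y \<otimes>\<^bsub>coxeter_group S m\<^esub> y = \<one>\<^bsub>coxeter_group S m\<^esub>"
proof -
  interpret W: group "coxeter_group S m" by (rule W_group)
  obtain w s where y: "y = inv\<^bsub>coxeter_group S m\<^esub> w \<otimes>\<^bsub>coxeter_group S m\<^esub> coxeter_gen S m s
        \<otimes>\<^bsub>coxeter_group S m\<^esub> w" and w: "w \<in> carrier (coxeter_group S m)" and s: "s \<in> S"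
    using assms(2) unfolding coxeter_quandle_def by auto
  have g: "coxeter_gen S m s \<in> carrier (coxeter_group S m)" using gen_carrier s .
  have canc: "\<And>z. z \<in> carrier (coxeter_group S m) \<Longrightarrow> w \<otimes>\<^bsub>coxeter_group S m\<^esub> (inv\<^bsub>coxeter_group S m\<^esub> w \<otimes>\<^bsub>coxeter_group S m\<^esub> z) = z"
    using w by (simp add: W.m_assoc[symmetric])
  have "y \<otimes>\<^bsub>coxeter_group S m\<^esub> y = inv\<^bsub>coxeter_group S m\<^esub> w \<otimes>\<^bsub>coxeter_group S m\<^esub>
     (coxeter_gen S m s \<otimes>\<^bsub>coxeter_group S m\<^esub> (w \<otimes>\<^bsub>coxeter_group S m\<^esub> inv\<^bsub>coxeter_group S m\<^esub> w)
     \<otimes>\<^bsub>coxeter_group S m\<^esub> coxeter_gen S m s) \<otimes>\<^bsub>coxeter_group S m\<^esub> w"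
    using w g by (simp add: y W.m_assoc canc)
  also have "\<dots> = \<one>\<^bsub>coxeter_group S m\<^esub>"
    using w g gen_sq[OF assms(1) s] by simp
  finally show ?thesis .
qed

lemma Q_inv:
  assumes "coxeter_matrix S m" "y \<in> coxeter_quandle S m"
  shows "inv\<^bsub>coxeter_group S m\<^esub> y = y"
proof -
  interpret W: group "coxeter_group S m" by (rule W_group)
  show ?thesis using Q_sq[OF assms] Q_carrier[OF assms(2)] by (simp add: W.inv_equality)
qed

lemma Q_conj:
  assumes "x \<in> coxeter_quandle S m" "g \<in> carrier (coxeter_group S m)"
  shows "inv\<^bsub>coxeter_group S m\<^esub> g \<otimes>\<^bsub>coxeter_group S m\<^esub> x \<otimes>\<^bsub>coxeter_group S m\<^esub> g
     \<in> coxeter_quandle S m"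
proof -
  interpret W: group "coxeter_group S m" by (rule W_group)
  obtain w s where y: "x = inv\<^bsub>coxeter_group S m\<^esub> w \<otimes>\<^bsub>coxeter_group S m\<^esub> coxeter_gen S m s
        \<otimes>\<^bsub>coxeter_group S m\<^esub> w" and w: "w \<in> carrier (coxeter_group S m)" and s: "s \<in> S"
    using assms(1) unfolding coxeter_quandle_def by auto
  have g: "coxeter_gen S m s \<in> carrier (coxeter_group S m)" using gen_carrier s .
  have "inv\<^bsub>coxeter_group S m\<^esub> g \<otimes>\<^bsub>coxeter_group S m\<^esub> x \<otimes>\<^bsub>coxeter_group S m\<^esub> g
     = inv\<^bsub>coxeter_group S m\<^esub> (w \<otimes>\<^bsub>coxeter_group S m\<^esub> g) \<otimes>\<^bsub>coxeter_group S m\<^esub> coxeter_gen S m s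
        \<otimes>\<^bsub>coxeter_group S m\<^esub> (w \<otimes>\<^bsub>coxeter_group S m\<^esub> g)"
    using w g assms(2) by (simp add: y W.m_assoc W.inv_mult_group)
  then show ?thesis unfolding coxeter_quandle_def using w s assms(2) by blast
qed

lemma qop_Q:
  assumes "coxeter_matrix S m" "x \<in> coxeter_quandle S m" "y \<in> coxeter_quandle S m"
  shows "qop S m x y \<in> coxeter_quandle S m"
  using Q_conj[OF assms(2) Q_carrier[OF assms(3)]] Q_inv[OF assms(1,3)] by (simp add: qop_def)


lemma Q_cancel:
  assumes "coxeter_matrix S m" "y \<in> coxeter_quandle S m" "t \<in> carrier (coxeter_group S m)"
  shows "y \<otimes>\<^bsub>coxeter_group S m\<^esub> (y \<otimes>\<^bsub>coxeter_group S m\<^esub> t) = t"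
proof -
  interpret W: group "coxeter_group S m" by (rule W_group)
  show ?thesis using Q_sq[OF assms(1,2)] Q_carrier[OF assms(2)] assms(3)
    by (simp add: W.m_assoc[symmetric])
qed

lemma adj_rels_on:
  assumes "coxeter_matrix S m" "r \<in> adj_rels S m"
  shows "word_on (coxeter_quandle S m) r"
  using assms qop_Q[OF assms(1)] unfolding adj_rels_def by auto

lemma adj_rels_eval:
  assumes "coxeter_matrix S m" "r \<in> adj_rels S m"
  shows "eval_word (coxeter_group S m) id r = \<one>\<^bsub>coxeter_group S m\<^esub>"
proof -
  interpret W: group "coxeter_group S m" by (rule W_group)
  obtain x y where r: "r = [(y, True), (x, False), (y, False), (qop S m x y, True)]"
    and x: "x \<in> coxeter_quandle S m" and y: "y \<in> coxeter_quandle S m"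
    using assms(2) unfolding adj_rels_def by auto
  note xc = Q_carrier[OF x] and yc = Q_carrier[OF y]
  have "eval_word (coxeter_group S m) id r = y \<otimes>\<^bsub>coxeter_group S m\<^esub> (x \<otimes>\<^bsub>coxeter_group S m\<^esub>
     (y \<otimes>\<^bsub>coxeter_group S m\<^esub> (y \<otimes>\<^bsub>coxeter_group S m\<^esub> (x \<otimes>\<^bsub>coxeter_group S m\<^esub> y))))"
    using xc yc qop_Q[OF assms(1) x y] by (simp add: r Q_inv[OF assms(1)] x y qop_def W.m_assoc)
  also have "\<dots> = \<one>\<^bsub>coxeter_group S m\<^esub>"
    using xc yc by (simp add: Q_cancel[OF assms(1) y] Q_cancel[OF assms(1) x] Q_sq[OF assms(1) y])
  finally show ?thesis .
qed

lemma phi_hom: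
  assumes "coxeter_matrix S m"
  shows "group_hom (adj_group S m) (coxeter_group S m) (adj_phi S m)"
  unfolding adj_group_def adj_phi_def
  by (rule group.induced_hom_hom[OF W_group]) (auto simp: Q_carrier adj_rels_eval[OF assms])

lemma phi_class:
  assumes "coxeter_matrix S m" "word_on (coxeter_quandle S m) w"
  shows "adj_phi S m (pres_class (coxeter_quandle S m) (adj_rels S m) w) = eval_word (coxeter_group S m) id w"
  unfolding adj_phi_def
  by (rule group.induced_class[OF W_group assms(2)]) (auto simp: Q_carrier adj_rels_eval[OF assms(1)])

lemma letter_conj:
  assumes "coxeter_matrix S m" "x \<in> coxeter_quandle S m" "y \<in> coxeter_quandle S m"
  shows "pres_eq (coxeter_quandle S m) (adj_rels S m) [(y,True),(x,False),(y,False)] [(qop S m x y, False)]"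
proof -
  let ?z = "qop S m x y"
  have z: "?z \<in> coxeter_quandle S m" using qop_Q[OF assms] .
  have r: "[(y, True), (x, False), (y, False), (?z, True)] \<in> adj_rels S m"
    unfolding adj_rels_def using assms by blast
  have "pres_eq (coxeter_quandle S m) (adj_rels S m) ([(y, True), (x, False), (y, False), (?z, True)] @ [(?z,False)]) ([] @ [(?z,False)])"
    using r adj_rels_on[OF assms(1) r] z by (intro pe_app pe_rel' pres_eq.refl) auto
  moreover have "pres_eq (coxeter_quandle S m) (adj_rels S m) ([(y,True),(x,False),(y,False)] @ [(?z, True),(?z,False)]) ([(y,True),(x,False),(y,False)] @ [])"
    using assms z by (intro pe_app pe_cancel' pres_eq.refl) auto
  ultimately show ?thesis by simp (meson pres_eq.sym pres_eq.trans)
qed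


lemma letter_conj2:
  assumes "coxeter_matrix S m" "x \<in> coxeter_quandle S m" "y \<in> coxeter_quandle S m"
  shows "pres_eq (coxeter_quandle S m) (adj_rels S m) [(y,\<not>b),(x,False),(y,b)] [(qop S m x y, False)]"
proof (cases b)
  case False then show ?thesis using letter_conj[OF assms] by simp
next
  case True
  interpret W: group "coxeter_group S m" by (rule W_group)
  let ?z = "qop S m x y"
  have z: "?z \<in> coxeter_quandle S m" using qop_Q[OF assms] .
  have "qop S m ?z y = x"
    using Q_carrier[OF assms(2)] Q_carrier[OF assms(3)]
    by (simp add: qop_def W.m_assoc Q_cancel[OF assms(1,3)] Q_sq[OF assms(1,3)])
  then have h: "pres_eq (coxeter_quandle S m) (adj_rels S m) [(y,True),(?z,False),(y,False)] [(x, False)]"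
    using letter_conj[OF assms(1) z assms(3)] by simp
  have "pres_eq (coxeter_quandle S m) (adj_rels S m) ([(y,False)] @ [(y,True),(?z,False),(y,False)] @ [(y,True)])
     ([(y,False)] @ [(x, False)] @ [(y,True)])"
    using h assms by (intro pe_app pres_eq.refl) auto
  moreover have "pres_eq (coxeter_quandle S m) (adj_rels S m) ([(y,False),(y,True)] @ [(?z,False),(y,False),(y,True)])
      ([] @ [(?z,False),(y,False),(y,True)])"
    using assms z by (intro pe_app_right pe_cancel') auto
  moreover have "pres_eq (coxeter_quandle S m) (adj_rels S m) ([(?z,False)] @ [(y,False),(y,True)]) ([(?z,False)] @ [])"
    using assms z by (intro pe_app_left pe_cancel') auto
  ultimately show ?thesis using True by simp (meson pres_eq.sym pres_eq.trans)
qed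

lemma conj_word:
  assumes cm: "coxeter_matrix S m"
  shows "word_on (coxeter_quandle S m) w \<Longrightarrow> x \<in> coxeter_quandle S m \<Longrightarrow>
    pres_eq (coxeter_quandle S m) (adj_rels S m) (winv w @ [(x,False)] @ w)
     [(inv\<^bsub>coxeter_group S m\<^esub> (eval_word (coxeter_group S m) id w) \<otimes>\<^bsub>coxeter_group S m\<^esub> x
        \<otimes>\<^bsub>coxeter_group S m\<^esub> eval_word (coxeter_group S m) id w, False)]"
proof (induction w arbitrary: x)
  interpret W: group "coxeter_group S m" by (rule W_group)
  case Nil then show ?case using Q_carrier[OF Nil(2)] by (simp add: pres_eq.refl)
next
  interpret W: group "coxeter_group S m" by (rule W_group)
  case (Cons a w)
  obtain y b where a: "a = (y,b)" by force
  have y: "y \<in> coxeter_quandle S m" using Cons a by simp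
  have w: "word_on (coxeter_quandle S m) w" using Cons by simp
  let ?z = "qop S m x y"
  let ?E = "eval_word (coxeter_group S m) id w"
  have z: "?z \<in> coxeter_quandle S m" using qop_Q[OF cm Cons(3) y] .
  have Ec: "?E \<in> carrier (coxeter_group S m)"
    by (rule W.eval_closed[OF _ w]) (auto simp: Q_carrier)
  have f1: "pres_eq (coxeter_quandle S m) (adj_rels S m) (winv w @ [(y,\<not>b),(x,False),(y,b)] @ w)
      (winv w @ [(?z,False)] @ w)"
    using letter_conj2[OF cm Cons(3) y] w by (intro pe_app pres_eq.refl) auto
  have f2: "pres_eq (coxeter_quandle S m) (adj_rels S m) (winv w @ [(?z,False)] @ w)
     [(inv\<^bsub>coxeter_group S m\<^esub> ?E \<otimes>\<^bsub>coxeter_group S m\<^esub> ?z \<otimes>\<^bsub>coxeter_group S m\<^esub> ?E, False)]"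
    using Cons(1)[OF w z] .
  have eq: "eval_word (coxeter_group S m) id (a#w) = y \<otimes>\<^bsub>coxeter_group S m\<^esub> ?E"
    using y Q_carrier[OF y] by (simp add: a Q_inv[OF cm y])
  have lhs: "winv (a#w) @ [(x,False)] @ (a#w) = winv w @ [(y,\<not>b),(x,False),(y,b)] @ w"
    by (simp add: a)
  have eqn: "inv\<^bsub>coxeter_group S m\<^esub> (y \<otimes>\<^bsub>coxeter_group S m\<^esub> ?E) \<otimes>\<^bsub>coxeter_group S m\<^esub> x
        \<otimes>\<^bsub>coxeter_group S m\<^esub> (y \<otimes>\<^bsub>coxeter_group S m\<^esub> ?E) =
      inv\<^bsub>coxeter_group S m\<^esub> ?E \<otimes>\<^bsub>coxeter_group S m\<^esub> ?z \<otimes>\<^bsub>coxeter_group S m\<^esub> ?E"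
    using Q_carrier[OF y] Q_carrier[OF Cons(3)] Ec
    by (simp add: qop_def W.inv_mult_group Q_inv[OF cm y] W.m_assoc)
  show ?case unfolding lhs eq eqn by (rule pres_eq.trans[OF f1 f2])
qed


lemma kernel_commute_gen:
  assumes cm: "coxeter_matrix S m" and w: "word_on (coxeter_quandle S m) w"
    and E: "eval_word (coxeter_group S m) id w = \<one>\<^bsub>coxeter_group S m\<^esub>"
    and a: "fst a \<in> coxeter_quandle S m"
  shows "pres_eq (coxeter_quandle S m) (adj_rels S m) ([a] @ w) (w @ [a])"
proof -
  interpret W: group "coxeter_group S m" by (rule W_group)
  let ?pe = "pres_eq (coxeter_quandle S m) (adj_rels S m)"
  have gen: "?pe ([(x,False)] @ w) (w @ [(x,False)])" if x: "x \<in> coxeter_quandle S m" for x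
  proof -
    have c: "?pe (winv w @ [(x,False)] @ w) [(x,False)]"
      using conj_word[OF cm w x] E Q_carrier[OF x] by simp
    have "?pe (w @ (winv w @ [(x,False)] @ w)) (w @ [(x,False)])"
      using c w by (intro pe_app_left)
    moreover have "?pe ((w @ winv w) @ ([(x,False)] @ w)) ([] @ ([(x,False)] @ w))"
      using w x by (intro pe_app_right pe_winv_r) auto
    ultimately show ?thesis by simp (meson pres_eq.sym pres_eq.trans)
  qed
  obtain x b where ab: "a = (x,b)" by force
  have x: "x \<in> coxeter_quandle S m" using a ab by simp
  show ?thesis
  proof (cases b)
    case False then show ?thesis using gen[OF x] ab by simp
  next
    case True
    have "?pe ([(x,True)] @ (([(x,False)] @ w) @ [(x,True)])) ([(x,True)] @ ((w @ [(x,False)]) @ [(x,True)]))"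
      using x by (intro pe_app_left pe_app_right gen) auto
    moreover have "?pe ([(x,True),(x,False)] @ (w @ [(x,True)])) ([] @ (w @ [(x,True)]))"
      using w x by (intro pe_app_right pe_cancel') auto
    moreover have "?pe (([(x,True)] @ w) @ [(x,False),(x,True)]) (([(x,True)] @ w) @ [])"
      using w x by (intro pe_app_left pe_cancel') auto
    ultimately show ?thesis using True ab by simp (meson pres_eq.sym pres_eq.trans)
  qed
qed

lemma kernel_commute_word:
  assumes cm: "coxeter_matrix S m" and w: "word_on (coxeter_quandle S m) w"
    and E: "eval_word (coxeter_group S m) id w = \<one>\<^bsub>coxeter_group S m\<^esub>"
  shows "word_on (coxeter_quandle S m) v \<Longrightarrow> pres_eq (coxeter_quandle S m) (adj_rels S m) (w @ v) (v @ w)"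
proof (induction v)
  case Nil then show ?case using w by (simp add: pres_eq.refl)
next
  case (Cons a v)
  have "pres_eq (coxeter_quandle S m) (adj_rels S m) ((w @ [a]) @ v) (([a] @ w) @ v)"
    using Cons by (intro pe_app_right pres_eq.sym[OF kernel_commute_gen[OF cm w E]]) auto
  moreover have "pres_eq (coxeter_quandle S m) (adj_rels S m) ([a] @ (w @ v)) ([a] @ (v @ w))"
    using Cons by (intro pe_app_left) auto
  ultimately show ?case by simp (meson pres_eq.trans)
qed

theorem lemma2p5:
  fixes S :: "'a set" and m :: "'a \<Rightarrow> 'a \<Rightarrow> enat"
  assumes "coxeter_matrix S m"
  shows "central_subgroup (kernel (adj_group S m) (coxeter_group S m) (adj_phi S m))
           (adj_group S m)"
proof -
  interpret phi: group_hom "adj_group S m" "coxeter_group S m" "adj_phi S m"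
    by (rule phi_hom[OF assms])
  show ?thesis unfolding central_subgroup_def
  proof (intro conjI ballI)
    show "subgroup (kernel (adj_group S m) (coxeter_group S m) (adj_phi S m)) (adj_group S m)"
      by (rule phi.subgroup_kernel)
  next
    fix z g assume z: "z \<in> kernel (adj_group S m) (coxeter_group S m) (adj_phi S m)"
      and g: "g \<in> carrier (adj_group S m)"
    obtain w where zw: "z = pres_class (coxeter_quandle S m) (adj_rels S m) w"
      and w: "word_on (coxeter_quandle S m) w"
      using z unfolding kernel_def adj_group_def carrier_pg by auto
    obtain v where gv: "g = pres_class (coxeter_quandle S m) (adj_rels S m) v"
      and v: "word_on (coxeter_quandle S m) v"
      using g unfolding adj_group_def carrier_pg by auto
    have E: "eval_word (coxeter_group S m) id w = \<one>\<^bsub>coxeter_group S m\<^esub>"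
      using z zw phi_class[OF assms w] unfolding kernel_def by simp
    show "z \<otimes>\<^bsub>adj_group S m\<^esub> g = g \<otimes>\<^bsub>adj_group S m\<^esub> z"
      unfolding zw gv adj_group_def using w v
      by (simp add: mult_class class_eq kernel_commute_word[OF assms w E])
  qed
qed

end
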